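(* Let $\beta=0$, $R\ge0$, and let $D\ge4$ be even. For $n>0$ let $\alpha_\infty^n$ be the maximum value of $\alpha_0$ over all numerical walls for the Chern character $(-R,0,n,0)$ on $\mathbb{P}^3$. Then $\alpha_\infty^D=\alpha_\infty^{D-1}$. In particular, $D-2<\alpha_\infty^D\le D-1$.
   Context: On $\mathbb{P}^3$ with hyperplane class $H$, Chern characters are the vectors of coefficients of $1,H,H^2,H^3$. For $v=(-R,0,n,0)$ and the Bayer–Macrì–Toda stability conditions $\sigma_{0,\alpha,s}$ ($\alpha,s>0$; central charge $Z=-(\operatorname{ch}_3-(s+\frac16)\alpha^2\operatorname{ch}_1)+\sqrt{-1}(\operatorname{ch}_2-\frac{\alpha^2}{2}\operatorname{ch}_0)$), a numerical wall is a curve $(s+\frac16)\alpha^2=\alpha_0^2/6$ with $\alpha_0^2=6e/c$, where $(r,c,d,e)=\operatorname{ch}(A)$ for some $A\in D^b(\mathbb{P}^3)$ with $c>0$ satisfying $0<d<n$, $0<c(6e)\le\min\{4d^2,4(n-d)^2\}$, and $-\frac{c(2n-2d)}{6e}-R\le r\le\frac{2cd}{6e}$. *)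

theory Defs
  imports Complex_Main
begin

text \<open>Chern characters on P^3 are written as quadruples (ch0, ch1, ch2, ch3) of
coefficients of 1, H, H^2, H^3.  The Chern character of O(k) is
(1, k, k^2/2, k^3/6).  Chern characters of objects of D^b(P^3): since
O, O(1), O(2), O(3) generate K_0(P^3) (Beilinson), these are exactly the
integral combinations of ch(O(k)), k = 0..3.\<close>

definition is_ch_P3 :: "real \<Rightarrow> real \<Rightarrow> real \<Rightarrow> real \<Rightarrow> bool" where
  "is_ch_P3 r c d e \<longleftrightarrow> (\<exists>a :: nat \<Rightarrow> int.
      r = (\<Sum>k\<le>3. real_of_int (a k)) \<and>
      c = (\<Sum>k\<le>3. real_of_int (a k) * real k) \<and>
      d = (\<Sum>k\<le>3. real_of_int (a k) * real k ^ 2 / 2) \<and>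
      e = (\<Sum>k\<le>3. real_of_int (a k) * real k ^ 3 / 6))"

definition wall_alphas :: "real \<Rightarrow> real \<Rightarrow> real set" where
  "wall_alphas R n = {sqrt (6 * e / c) | r c d e.
      is_ch_P3 r c d e \<and> c > 0 \<and> 0 < d \<and> d < n \<and>
      0 < c * (6 * e) \<and> c * (6 * e) \<le> min (4 * d ^ 2) (4 * (n - d) ^ 2) \<and>
      - (c * (2 * n - 2 * d)) / (6 * e) - R \<le> r \<and> r \<le> 2 * c * d / (6 * e)}"

definition alpha_inf :: "real \<Rightarrow> real \<Rightarrow> real" where
  "alpha_inf R n = Max (wall_alphas R n)"

end

theory Submission
  imports Defs
begin
lemma sum4: "(\<Sum>k\<le>3::nat. f k) = f 0 + f 1 + f 2 + (f 3 :: real)"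
  by (simp add: eval_nat_numeral atMost_Suc add_ac)

lemma ch_int:
  assumes "is_ch_P3 r c d e"
  shows "\<exists>a0 a1 a2 a3 :: int. r = real_of_int (a0+a1+a2+a3) \<and> c = real_of_int (a1+2*a2+3*a3) \<and> 2*d = real_of_int (a1+4*a2+9*a3) \<and> 6*e = real_of_int (a1+8*a2+27*a3)"
proof -
  obtain a where h: "r = (\<Sum>k\<le>3. real_of_int (a k))"
      "c = (\<Sum>k\<le>3. real_of_int (a k) * real k)"
      "d = (\<Sum>k\<le>3. real_of_int (a k) * real k ^ 2 / 2)"
      "e = (\<Sum>k\<le>3. real_of_int (a k) * real k ^ 3 / 6)"
    using assms unfolding is_ch_P3_def by blast
  show ?thesis
    apply (rule exI[of _ "a 0"], rule exI[of _ "a 1"], rule exI[of _ "a 2"], rule exI[of _ "a 3"])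
    using h by (simp add: sum4 field_simps)
qed

lemma ch_mk:
  fixes a0 a1 a2 a3 :: int
  shows "is_ch_P3 (real_of_int (a0+a1+a2+a3)) (real_of_int (a1+2*a2+3*a3)) (real_of_int (a1+4*a2+9*a3)/2) (real_of_int (a1+8*a2+27*a3)/6)"
  unfolding is_ch_P3_def
  apply (rule exI[of _ "\<lambda>k. if k = 0 then a0 else if k = 1 then a1 else if k = 2 then a2 else a3"])
  by (simp add: sum4 field_simps)

lemma wall_int:
  assumes "x \<in> wall_alphas R n"
  shows "\<exists>C E M :: int. C > 0 \<and> 0 < M \<and> real_of_int M < 2*n \<and> 0 < C*E \<and>
    real_of_int (C*E) \<le> (real_of_int M)^2 \<and> real_of_int (C*E) \<le> (2*n - real_of_int M)^2 \<and>
    (M - C) mod 2 = 0 \<and> (E - 3*M + 2*C) mod 6 = 0 \<and> x = sqrt (real_of_int E / real_of_int C)"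
proof -
  obtain r c d e where h: "x = sqrt (6 * e / c)" "is_ch_P3 r c d e" "c > 0" "0 < d" "d < n"
      "0 < c * (6 * e)" "c * (6 * e) \<le> min (4 * d ^ 2) (4 * (n - d) ^ 2)"
    using assms unfolding wall_alphas_def by blast
  obtain a0 a1 a2 a3 :: int where a: "r = real_of_int (a0+a1+a2+a3)" "c = real_of_int (a1+2*a2+3*a3)"
    "2*d = real_of_int (a1+4*a2+9*a3)" "6*e = real_of_int (a1+8*a2+27*a3)"
    using ch_int[OF h(2)] by blast
  define C where "C = a1+2*a2+3*a3"
  define M where "M = a1+4*a2+9*a3"
  define E where "E = a1+8*a2+27*a3"
  have cC: "c = real_of_int C" and dM: "d = real_of_int M / 2" and eE: "6*e = real_of_int E"
    using a unfolding C_def M_def E_def by auto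
  have dM2: "2*d = real_of_int M" using a(3) unfolding M_def by simp
  have "C > 0" using h(3) cC by simp
  moreover have "0 < M" using h(4) dM by simp
  moreover have "real_of_int M < 2*n" using h(5) dM by simp
  moreover have "0 < C*E" using h(6) cC eE by (simp flip: of_int_mult)
  moreover have "real_of_int (C*E) \<le> (real_of_int M)^2"
    using h(7) cC eE dM by (simp add: power2_eq_square)
  moreover have "real_of_int (C*E) \<le> (2*n - real_of_int M)^2"
  proof -
    have "real_of_int (C*E) = c * (6*e)" using cC eE by simp
    also have "\<dots> \<le> 4 * (n - d)^2" using h(7) by simp
    also have "\<dots> = (2*n - 2*d)^2" by (simp add: power2_eq_square algebra_simps)
    also have "\<dots> = (2*n - real_of_int M)^2" by (simp only: dM2)
    finally show ?thesis .
  qed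
  moreover have "(M - C) mod 2 = 0"
  proof -
    have "M - C = 2*(a2+3*a3)" unfolding M_def C_def by simp
    thus ?thesis by simp
  qed
  moreover have "(E - 3*M + 2*C) mod 6 = 0"
  proof -
    have "E - 3*M + 2*C = 6*a3" unfolding M_def C_def E_def by simp
    thus ?thesis by simp
  qed
  moreover have "x = sqrt (real_of_int E / real_of_int C)" using h(1) cC eE by simp
  ultimately show ?thesis by (intro exI[of _ C] exI[of _ E] exI[of _ M] conjI) (assumption+)
qed

lemma wall_finite:
  assumes "n \<le> real K"
  shows "finite (wall_alphas R n)"
proof -
  define N where "N = 4 * (int K)^2"
  have "wall_alphas R n \<subseteq> (\<lambda>(C,E). sqrt (real_of_int E / real_of_int C)) ` ({1..N} \<times> {1..N})"
  proof
    fix x assume "x \<in> wall_alphas R n"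
    then obtain C E M :: int where h: "C > 0" "0 < M" "real_of_int M < 2*n" "0 < C*E"
      "real_of_int (C*E) \<le> (real_of_int M)^2" "x = sqrt (real_of_int E / real_of_int C)"
      using wall_int by blast
    have E0: "E > 0" using h(1,4) zero_less_mult_pos by blast
    have "M < 2 * int K" using h(3) assms by linarith
    hence "M^2 \<le> (2 * int K)^2" using h(2) by (intro power_mono) auto
    moreover have "C*E \<le> M^2" using h(5) by (simp flip: of_int_power of_int_mult del: of_int_mult)
    ultimately have CE: "C*E \<le> N" unfolding N_def by (simp add: power_mult_distrib)
    have c1: "C \<le> C*E" using E0 h(1) by simp
    have c2: "E \<le> C*E" using E0 h(1) by simp
    have "C \<le> N" using c1 CE by linarith
    moreover have "E \<le> N" using c2 CE by linarith
    ultimately have "C \<in> {1..N}" "E \<in> {1..N}" using h(1) E0 by auto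
    thus "x \<in> (\<lambda>(C,E). sqrt (real_of_int E / real_of_int C)) ` ({1..N} \<times> {1..N})"
      using h(6) by force
  qed
  thus ?thesis by (rule finite_subset) auto
qed

lemma wall_upper:
  assumes "x \<in> wall_alphas R (real D)" "even D" "D \<ge> 2"
  shows "x \<le> real D - 1"
proof -
  obtain C E M :: int where h: "C > 0" "0 < M" "real_of_int M < 2*real D" "0 < C*E"
      "real_of_int (C*E) \<le> (real_of_int M)^2" "real_of_int (C*E) \<le> (2*real D - real_of_int M)^2"
      "(M - C) mod 2 = 0" "x = sqrt (real_of_int E / real_of_int C)"
    using wall_int[OF assms(1)] by (elim exE conjE) (rule that; assumption)
  define Di where "Di = int D"
  have Di2: "Di \<ge> 2" using assms(3) unfolding Di_def by simp
  have evD: "Di mod 2 = 0" using assms(2) unfolding Di_def by presburger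
  have M2: "M < 2*Di" using h(3) unfolding Di_def by linarith
  have h5: "C*E \<le> M^2" using h(5) by (simp flip: of_int_power of_int_mult del: of_int_mult)
  have "real_of_int (C*E) \<le> real_of_int ((2*Di - M)^2)" using h(6) unfolding Di_def by simp
  hence h6: "C*E \<le> (2*Di - M)^2" by (simp only: of_int_le_iff)
  have E0: "E > 0" using h(1,4) zero_less_mult_pos by blast
  obtain t where t: "t = M \<or> t = 2*Di - M" "0 < t" "t \<le> Di" "C*E \<le> t^2"
  proof (cases "M \<le> Di")
    case True thus ?thesis using that[of M] h5 h(2) by auto
  next
    case False thus ?thesis using that[of "2*Di - M"] h6 M2 by auto
  qed
  have key: "E \<le> C*(Di-1)^2"
  proof (cases "C = 1")
    case True
    hence "M mod 2 = 1" using h(7) by presburger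
    hence "t \<noteq> Di" using t(1) evD by presburger
    hence "t \<le> Di - 1" using t(3) by simp
    hence "t^2 \<le> (Di-1)^2" using t(2) by (intro power_mono) auto
    thus ?thesis using t(4) True by simp
  next
    case False
    hence C2: "C \<ge> 2" using h(1) by simp
    have "t^2 \<le> Di^2" using t(2,3) by (intro power_mono) auto
    also have "Di^2 \<le> 4*(Di-1)^2"
    proof -
      have "0 \<le> (3*Di-2)*(Di-2)" using Di2 by simp
      thus ?thesis by (simp add: power2_eq_square algebra_simps)
    qed
    also have "4*(Di-1)^2 \<le> C*C*(Di-1)^2"
    proof -
      have "4 \<le> C*C" using C2 mult_mono[OF C2 C2] by simp
      thus ?thesis by (intro mult_right_mono) auto
    qed
    finally have "C*E \<le> C*(C*(Di-1)^2)" using t(4) by (simp add: mult.assoc)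
    thus ?thesis using h(1) by simp
  qed
  have "real_of_int E / real_of_int C \<le> (real D - 1)^2"
  proof -
    have "real_of_int E \<le> real_of_int (C * (int D - 1)^2)"
      using key unfolding Di_def of_int_le_iff .
    hence "real_of_int E \<le> real_of_int C * (real D - 1)^2" by simp
    thus ?thesis using h(1) by (simp add: divide_le_eq mult.commute)
  qed
  hence "x \<le> sqrt ((real D - 1)^2)" unfolding h(8) by (rule real_sqrt_le_mono)
  also have "\<dots> = real D - 1" using assms(3) by simp
  finally show ?thesis .
qed

lemma wall_top:
  assumes "x \<in> wall_alphas R n" "real D - 2 < x" "n = real D \<or> n = real D - 1"
    "even D" "D \<ge> 4"
  shows "\<exists>E::int. (int D - 2)^2 < E \<and> E \<le> (int D - 1)^2 \<and> E mod 6 = 1 \<and> x = sqrt (real_of_int E)"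
proof -
  obtain C E M :: int where h: "C > 0" "0 < M" "real_of_int M < 2*n" "0 < C*E"
      "real_of_int (C*E) \<le> (real_of_int M)^2" "real_of_int (C*E) \<le> (2*n - real_of_int M)^2"
      "(M - C) mod 2 = 0" "(E - 3*M + 2*C) mod 6 = 0" "x = sqrt (real_of_int E / real_of_int C)"
    using wall_int[OF assms(1)] by (elim exE conjE) (rule that; assumption)
  define Di where "Di = int D"
  define Ni where "Ni = (if n = real D then Di else Di - 1)"
  have nN: "n = real_of_int Ni" using assms(3) unfolding Ni_def Di_def by auto
  have NiD: "Di - 1 \<le> Ni" "Ni \<le> Di" unfolding Ni_def by auto
  have Di4: "Di \<ge> 4" using assms(5) unfolding Di_def by simp
  have evD: "Di mod 2 = 0" using assms(4) unfolding Di_def by presburger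
  have M2: "M < 2*Ni" using h(3) unfolding nN by linarith
  have h5: "C*E \<le> M^2" using h(5) by (simp flip: of_int_power of_int_mult del: of_int_mult)
  have "real_of_int (C*E) \<le> real_of_int ((2*Ni - M)^2)" using h(6) unfolding nN by simp
  hence h6: "C*E \<le> (2*Ni - M)^2" by (simp only: of_int_le_iff)
  have E0: "E > 0" using h(1,4) zero_less_mult_pos by blast
  have x0: "0 \<le> real_of_int (Di - 2)" using Di4 by simp
  have a: "real_of_int (Di - 2) < sqrt (real_of_int E / real_of_int C)"
    using assms(2) h(9) unfolding Di_def by simp
  have "(real_of_int (Di - 2))^2 < real_of_int E / real_of_int C"
  proof -
    have q0: "0 \<le> real_of_int E / real_of_int C" using E0 h(1) by simp
    have "(real_of_int (Di - 2))^2 < (sqrt (real_of_int E / real_of_int C))^2"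
      by (rule power_strict_mono[OF a x0]) simp
    thus ?thesis using q0 by simp
  qed
  hence "real_of_int C * (real_of_int (Di - 2))^2 < real_of_int E"
    using h(1) by (simp add: less_divide_eq mult.commute)
  hence "real_of_int (C * (Di-2)^2) < real_of_int E" by simp
  hence low: "C * (Di-2)^2 < E" unfolding of_int_less_iff .
  obtain t where t: "t = M \<or> t = 2*Ni - M" "0 < t" "t \<le> Di" "C*E \<le> t^2"
  proof (cases "M \<le> Ni")
    case True thus ?thesis using that[of M] h5 h(2) NiD by auto
  next
    case False thus ?thesis using that[of "2*Ni - M"] h6 M2 NiD by auto
  qed
  have C1: "C = 1"
  proof (rule ccontr)
    assume "C \<noteq> 1"
    hence C2: "C \<ge> 2" using h(1) by simp
    have "Di^2 \<le> 4*(Di-2)^2"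
    proof -
      have "0 \<le> (3*Di-4)*(Di-4)" using Di4 by simp
      thus ?thesis by (simp add: power2_eq_square algebra_simps)
    qed
    also have "4*(Di-2)^2 \<le> C*C*(Di-2)^2"
    proof -
      have "4 \<le> C*C" using C2 mult_mono[OF C2 C2] by simp
      thus ?thesis by (intro mult_right_mono) auto
    qed
    also have "C*C*(Di-2)^2 < C*E" using low h(1) by (simp add: mult.assoc)
    also have "C*E \<le> t^2" by (rule t(4))
    also have "t^2 \<le> Di^2" using t(2,3) by (intro power_mono) auto
    finally show False by simp
  qed
  have Mo: "M mod 2 = 1" using h(7) C1 by presburger
  have lowE: "(Di-2)^2 < E" using low C1 by simp
  have "(Di-2)^2 < M^2" using lowE h5 C1 by simp
  hence Mlo: "Di - 2 < M" using power_less_imp_less_base[of "Di-2" 2 M] h(2) by simp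
  have "(Di-2)^2 < (2*Ni - M)^2" using lowE h6 C1 by simp
  hence Mhi: "Di - 2 < 2*Ni - M" using power_less_imp_less_base[of "Di-2" 2 "2*Ni - M"] M2 by simp
  have Mc: "M = Di - 1 \<or> (M = Di + 1 \<and> Ni = Di)" using Mlo Mhi NiD Mo evD by presburger
  have Eup: "E \<le> (Di-1)^2" using Mc h5 h6 C1 by auto
  have Emod: "E mod 6 = 1" using Mc h(8) C1 evD by presburger
  show ?thesis
    using lowE Eup Emod h(9) C1 unfolding Di_def by auto
qed

lemma wall_mem:
  fixes E :: int
  assumes "(int D - 2)^2 < E" "E \<le> (int D - 1)^2" "E mod 6 = 1"
    "n = real D \<or> n = real D - 1" "even D" "D \<ge> 4" "R \<ge> 0"
  shows "sqrt (real_of_int E) \<in> wall_alphas R n"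
proof -
  define Di where "Di = int D"
  have Di4: "Di \<ge> 4" using assms(6) unfolding Di_def by simp
  have evD: "Di mod 2 = 0" using assms(5) unfolding Di_def by presburger
  define a3 where "a3 = (E - 3*(Di-1) + 2) div 6"
  define a2 where "a2 = (Di-2) div 2 - 3*a3"
  define a1 where "a1 = 1 - 2*a2 - 3*a3"
  define a0 where "a0 = -(a1+a2+a3)"
  have d6: "6*a3 = E - 3*(Di-1) + 2" unfolding a3_def using assms(3) evD by presburger
  have d2: "2*((Di-2) div 2) = Di - 2" using evD by presburger
  have e0: "a0+a1+a2+a3 = 0" unfolding a0_def by simp
  have e1: "a1+2*a2+3*a3 = 1" unfolding a1_def by simp
  have e2: "a1+4*a2+9*a3 = Di - 1" unfolding a1_def a2_def using d2 by simp
  have e3: "a1+8*a2+27*a3 = E" unfolding a1_def a2_def using d2 d6 by simp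
  have ch: "is_ch_P3 0 1 (real_of_int (Di-1)/2) (real_of_int E/6)"
    using ch_mk[of a0 a1 a2 a3] unfolding e0 e1 e2 e3 by simp
  have E0: "E > 0" using assms(1) by (smt (verit) zero_le_power2)
  have nd: "real_of_int (Di-1)/2 < n" using assms(4) Di4 unfolding Di_def by auto
  have "4 * (real_of_int (Di-1)/2)^2 = (real_of_int (Di - 1))^2" by (simp add: power2_eq_square)
  also have "\<dots> \<le> 4 * (n - real_of_int (Di-1)/2)^2"
  proof -
    have "real_of_int (Di - 1) \<le> 2 * (n - real_of_int (Di-1)/2)" using assms(4) unfolding Di_def by (auto simp: field_simps)
    from this have "(real_of_int (Di - 1))^2 \<le> (2 * (n - real_of_int (Di-1)/2))^2"
      using Di4 by (intro power_mono) auto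
    moreover have "\<And>w::real. (2*w)^2 = 4*w^2" by (simp add: power2_eq_square)
    ultimately show ?thesis by (metis)
  qed
  finally have m2: "4 * (real_of_int (Di-1)/2)^2 \<le> 4 * (n - real_of_int (Di-1)/2)^2" .
  have m1: "real_of_int E \<le> 4 * (real_of_int (Di-1)/2)^2"
  proof -
    have "real_of_int E \<le> real_of_int ((Di-1)^2)" using assms(2) unfolding Di_def of_int_le_iff .
    thus ?thesis by (simp add: power2_eq_square)
  qed
  have rl: "- (1 * (2 * n - 2 * (real_of_int (Di-1)/2))) / (6 * (real_of_int E/6)) - R \<le> 0"
  proof -
    have "0 \<le> (1 * (2 * n - 2 * (real_of_int (Di-1)/2))) / (6 * (real_of_int E/6))"
      using nd E0 by simp
    thus ?thesis using assms(7) minus_divide_left[of "1 * (2 * n - 2 * (real_of_int (Di-1)/2))" "6 * (real_of_int E/6)"] by linarith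
  qed
  have ru: "0 \<le> 2 * 1 * (real_of_int (Di-1)/2) / (6 * (real_of_int E/6))" using E0 Di4 by simp
  show ?thesis
    unfolding wall_alphas_def mem_Collect_eq
    apply (rule exI[of _ 0], rule exI[of _ 1], rule exI[of _ "real_of_int (Di-1)/2"], rule exI[of _ "real_of_int E/6"])
    using ch nd m1 m2 rl ru E0 Di4 by simp
qed

lemma witness:
  assumes "even D" "D \<ge> 4"
  shows "\<exists>E::int. (int D - 2)^2 < E \<and> E \<le> (int D - 1)^2 \<and> E mod 6 = 1"
proof -
  define k where "k = int D - 1"
  have k3: "k \<ge> 3" using assms(2) unfolding k_def by simp
  have "k mod 2 = 1" using assms(1) unfolding k_def by presburger
  hence km: "k mod 6 = 1 \<or> k mod 6 = 3 \<or> k mod 6 = 5" by presburger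
  have pm: "k^2 mod 6 = ((k mod 6)^2) mod 6" by (simp add: power_mod)
  have ks: "k^2 mod 6 = 1 \<or> k^2 mod 6 = 3" using km pm by auto
  have low: "(k - 1)^2 < k^2 - 2"
  proof -
    have "(k-1)^2 = k^2 - 2*k + 1" by (simp add: power2_eq_square algebra_simps)
    thus ?thesis using k3 by simp
  qed
  show ?thesis
  proof (cases "k^2 mod 6 = 1")
    case True thus ?thesis using low unfolding k_def
      by (intro exI[of _ "(int D - 1)^2"]) (auto simp: algebra_simps)
  next
    case False
    hence "k^2 mod 6 = 3" using ks by simp
    hence "(k^2 - 2) mod 6 = 1" by (simp add: mod_diff_eq[symmetric])
    thus ?thesis using low unfolding k_def
      by (intro exI[of _ "(int D - 1)^2 - 2"]) (auto simp: algebra_simps)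
  qed
qed

theorem lemma4p3:
  fixes R :: int and D :: nat
  assumes "R \<ge> 0" and "D \<ge> 4" and "even D"
  shows "alpha_inf (real_of_int R) (real D) = alpha_inf (real_of_int R) (real D - 1)
    \<and> real D - 2 < alpha_inf (real_of_int R) (real D)
    \<and> alpha_inf (real_of_int R) (real D) \<le> real D - 1"
proof -
  define A where "A = wall_alphas (real_of_int R) (real D)"
  define B where "B = wall_alphas (real_of_int R) (real D - 1)"
  have fA: "finite A" unfolding A_def by (rule wall_finite[of _ D]) simp
  have fB: "finite B" unfolding B_def by (rule wall_finite[of _ D]) simp
  have R0: "real_of_int R \<ge> 0" using assms(1) by simp
  have PA: "\<exists>E::int. (int D - 2)^2 < E \<and> E \<le> (int D - 1)^2 \<and> E mod 6 = 1 \<and> x = sqrt (real_of_int E)"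
    if "x \<in> A" "real D - 2 < x" for x
    by (rule wall_top[OF that(1)[unfolded A_def] that(2)]) (use assms in auto)
  have PB: "\<exists>E::int. (int D - 2)^2 < E \<and> E \<le> (int D - 1)^2 \<and> E mod 6 = 1 \<and> x = sqrt (real_of_int E)"
    if "x \<in> B" "real D - 2 < x" for x
    by (rule wall_top[OF that(1)[unfolded B_def] that(2)]) (use assms in auto)
  have bk: "sqrt (real_of_int E) \<in> A \<and> sqrt (real_of_int E) \<in> B \<and> real D - 2 < sqrt (real_of_int E)"
    if "(int D - 2)^2 < E" "E \<le> (int D - 1)^2" "E mod 6 = 1" for E :: int
  proof (intro conjI)
    show "sqrt (real_of_int E) \<in> A" unfolding A_def
      by (rule wall_mem[OF that]) (use assms R0 in auto)
    show "sqrt (real_of_int E) \<in> B" unfolding B_def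
      by (rule wall_mem[OF that]) (use assms R0 in auto)
    have "real_of_int ((int D - 2)^2) < real_of_int E" using that(1) unfolding of_int_less_iff .
    hence "(real D - 2)^2 < real_of_int E" by simp
    thus "real D - 2 < sqrt (real_of_int E)" by (rule real_less_rsqrt)
  qed
  obtain E0 :: int where E0: "(int D - 2)^2 < E0" "E0 \<le> (int D - 1)^2" "E0 mod 6 = 1"
    using witness assms by blast
  note w = bk[OF E0]
  have neA: "A \<noteq> {}" using w by blast
  have neB: "B \<noteq> {}" using w by blast
  have mA: "Max A \<in> A" using Max_in fA neA by blast
  have mB: "Max B \<in> B" using Max_in fB neB by blast
  have gA: "real D - 2 < Max A" using w Max_ge[OF fA, of "sqrt (real_of_int E0)"] by linarith
  have gB: "real D - 2 < Max B" using w Max_ge[OF fB, of "sqrt (real_of_int E0)"] by linarith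
  obtain E1 where E1: "(int D - 2)^2 < E1" "E1 \<le> (int D - 1)^2" "E1 mod 6 = 1" "Max A = sqrt (real_of_int E1)"
    using PA[OF mA gA] by blast
  have "Max A \<in> B" using bk[OF E1(1-3)] E1(4) by simp
  hence le1: "Max A \<le> Max B" by (rule Max_ge[OF fB])
  obtain E2 where E2: "(int D - 2)^2 < E2" "E2 \<le> (int D - 1)^2" "E2 mod 6 = 1" "Max B = sqrt (real_of_int E2)"
    using PB[OF mB gB] by blast
  have "Max B \<in> A" using bk[OF E2(1-3)] E2(4) by simp
  hence le2: "Max B \<le> Max A" by (rule Max_ge[OF fA])
  have upA: "y \<le> real D - 1" if "y \<in> A" for y
    using that unfolding A_def by (rule wall_upper) (use assms in auto)
  have up: "Max A \<le> real D - 1" by (rule upA[OF mA])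
  show ?thesis unfolding alpha_inf_def A_def[symmetric] B_def[symmetric]
    using le1 le2 gA up by simp
qed
end
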